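(* For any commutative ring $\mathbf k$ and any $0\le d\le m-1$, the complex $\operatorname{sk}_d\Delta_{[m]}$ is HMF-presented over $\mathbf k$.
   Context: $\Delta_{[m]}$ is the full simplex on $[m]$, $\operatorname{sk}_d$ its $d$-skeleton. For a complex $\mathcal K$ and $I\subseteq[m]$: $\mathcal K_I$ is the full subcomplex, $\partial\Delta_I=\{J\subsetneq I\}$, $\partial^2\Delta_I=\{J\subseteq I:|I\setminus J|\ge2\}$, $\mathrm{MF}(\mathcal K)=\{I:\mathcal K_I=\partial\Delta_I\}$, $\mathrm{AMF}(\mathcal K)=\{L:\partial^2\Delta_L\subseteq\mathcal K_L\subsetneq\partial\Delta_L\}$. With oriented augmented chains $e_I$ and $d(e_I)=\sum_{i\in I}(-1)^{|I_{<i}|}e_{I\setminus i}$, $I_{<i}=\{j\in I:j<i\}$, each $I\in\mathrm{MF}(\mathcal K_J)$ defines $[\partial\Delta_I]\in\widetilde H_{|I|-2}(\mathcal K_J;\mathbf k)$ (class of $d(e_I)$), and each $L\in\mathrm{AMF}(\mathcal K_J)$ defines the formal relation $\rho_L=\sum_{i\in L,L\setminus i\notin\mathcal K}(-1)^{|L_{<i}|}x_{L\setminus i}$. $\mathcal K$ is HMF-presented over $\mathbf k$ if for every $J\subseteq[m]$ the sequence $\bigoplus_{L\in\mathrm{AMF}(\mathcal K_J)}\mathbf k\rho_L\to\bigoplus_{I\in\mathrm{MF}(\mathcal K_J)}\mathbf kx_I\to\widetilde H_*(\mathcal K_J;\mathbf k)\to0$, $x_I\mapsto[\partial\Delta_I]$,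 is exact. *)

theory Defs
  imports Main
begin

text \<open>Simplicial complexes on a finite vertex set of naturals are sets of finite
vertex sets (faces), containing the empty face. Chains of the augmented
oriented chain complex with coefficients in a commutative ring 'k are
functions from vertex sets to 'k supported on faces of a fixed cardinality
q (= dimension + 1).\<close>

definition full_sub :: "nat set set \<Rightarrow> nat set \<Rightarrow> nat set set" where
  "full_sub K J = {\<sigma> \<in> K. \<sigma> \<subseteq> J}"

definition bdry_simplex :: "nat set \<Rightarrow> nat set set" where
  "bdry_simplex I = {S. S \<subset> I}"

definition bdry2_simplex :: "nat set \<Rightarrow> nat set set" where
  "bdry2_simplex I = {S. S \<subseteq> I \<and> card (I - S) \<ge> 2}"

definition MF :: "nat set set \<Rightarrow> nat set \<Rightarrow> nat set set" where
  "MF K V = {I. I \<subseteq> V \<and> full_sub K I = bdry_simplex I}"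

definition AMF :: "nat set set \<Rightarrow> nat set \<Rightarrow> nat set set" where
  "AMF K V = {L. L \<subseteq> V \<and> bdry2_simplex L \<subseteq> full_sub K L \<and> full_sub K L \<subset> bdry_simplex L}"

definition skeleton :: "nat \<Rightarrow> nat \<Rightarrow> nat set set" where
  "skeleton d m = {\<sigma>. \<sigma> \<subseteq> {1..m} \<and> card \<sigma> \<le> d + 1}"

definition sgn_at :: "nat set \<Rightarrow> nat \<Rightarrow> 'k::comm_ring_1" where
  "sgn_at I i = (- 1) ^ card {j \<in> I. j < i}"

definition bd_elem :: "nat set \<Rightarrow> nat set \<Rightarrow> 'k::comm_ring_1" where
  "bd_elem I = (\<lambda>\<tau>. \<Sum>i\<in>I. if \<tau> = I - {i} then sgn_at I i else 0)"

definition chain_on :: "nat set set \<Rightarrow> nat \<Rightarrow> (nat set \<Rightarrow> 'k::zero) \<Rightarrow> bool" where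
  "chain_on K q c \<longleftrightarrow> (\<forall>\<tau>. c \<tau> \<noteq> 0 \<longrightarrow> \<tau> \<in> K \<and> card \<tau> = q)"

definition bd :: "nat set set \<Rightarrow> (nat set \<Rightarrow> 'k::comm_ring_1) \<Rightarrow> nat set \<Rightarrow> 'k" where
  "bd K c = (\<lambda>\<tau>. \<Sum>I\<in>K. c I * bd_elem I \<tau>)"

definition is_cycle :: "nat set set \<Rightarrow> nat \<Rightarrow> (nat set \<Rightarrow> 'k::comm_ring_1) \<Rightarrow> bool" where
  "is_cycle K q z \<longleftrightarrow> chain_on K q z \<and> bd K z = (\<lambda>_. 0)"

definition is_boundary :: "nat set set \<Rightarrow> nat \<Rightarrow> (nat set \<Rightarrow> 'k::comm_ring_1) \<Rightarrow> bool" where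
  "is_boundary K q z \<longleftrightarrow> (\<exists>b. chain_on K (Suc q) b \<and> z = bd K b)"

text \<open>Coefficient of x_I in the formal relation rho_L.\<close>
definition rho_coef :: "nat set set \<Rightarrow> nat set \<Rightarrow> nat set \<Rightarrow> 'k::comm_ring_1" where
  "rho_coef K L I = (\<Sum>i\<in>L. if L - {i} \<notin> K \<and> I = L - {i} then sgn_at L i else 0)"

text \<open>HMF-presentation over 'k, with H_* the (degreewise) reduced homology of the
augmented chain complex; exactness is unfolded: surjectivity onto each
homology group, and kernel = span of the relations.\<close>
definition HMF_presented :: "'k::comm_ring_1 itself \<Rightarrow> nat set \<Rightarrow> nat set set \<Rightarrow> bool" where
  "HMF_presented _ V K \<longleftrightarrow>
    (\<forall>J. J \<subseteq> V \<and> J \<noteq> {} \<longrightarrow>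
      (\<forall>q (z :: nat set \<Rightarrow> 'k). is_cycle (full_sub K J) q z \<longrightarrow>
         (\<exists>c :: nat set \<Rightarrow> 'k. is_boundary (full_sub K J) q
            (\<lambda>\<tau>. z \<tau> - (\<Sum>I\<in>{I \<in> MF (full_sub K J) J. card I = Suc q}. c I * bd_elem I \<tau>))))
      \<and>
      (\<forall>c :: nat set \<Rightarrow> 'k. (\<forall>I. c I \<noteq> 0 \<longrightarrow> I \<in> MF (full_sub K J) J) \<longrightarrow>
         ((\<forall>q. is_boundary (full_sub K J) q
               (\<lambda>\<tau>. \<Sum>I\<in>{I \<in> MF (full_sub K J) J. card I = Suc q}. c I * bd_elem I \<tau>))
          \<longleftrightarrow>
          (\<exists>a :: nat set \<Rightarrow> 'k. c = (\<lambda>I. \<Sum>L\<in>AMF (full_sub K J) J. a L * rho_coef (full_sub K J) L I)))))"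

end

theory Submission imports Defs begin

lemma sgn_insert_self: "sgn_at (insert i s) i = sgn_at s i"
  unfolding sgn_at_def by (rule arg_cong[where f="\<lambda>n. (-1)^card n"]) auto

lemma sgn_insert_other:
  assumes "j \<notin> s" "j \<noteq> i"
  shows "(sgn_at (insert j s) i :: 'k::comm_ring_1) = (if j < i then - sgn_at s i else sgn_at s i)"
proof (cases "j < i")
  case True
  have e: "{x \<in> insert j s. x < i} = insert j {x \<in> s. x < i}" using True by auto
  have f: "finite {x \<in> s. x < i}" by (rule finite_subset[of _ "{..<i}"]) auto
  show ?thesis unfolding sgn_at_def e using True assms f by simp
next
  case False
  have e: "{x \<in> insert j s. x < i} = {x \<in> s. x < i}" using False by auto
  show ?thesis unfolding sgn_at_def e using False by simp
qed

lemma sgn_min: "(\<forall>j\<in>s. i \<le> j) \<Longrightarrow> sgn_at s i = 1"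
proof -
  assume "\<forall>j\<in>s. i \<le> j"
  then have "{j \<in> s. j < i} = {}" by auto
  then show ?thesis unfolding sgn_at_def by (metis card.empty power_0)
qed

definition Dop :: "nat set \<Rightarrow> (nat set \<Rightarrow> 'k::comm_ring_1) \<Rightarrow> nat set \<Rightarrow> 'k" where
  "Dop J c \<tau> = (\<Sum>i\<in>J-\<tau>. c (insert i \<tau>) * sgn_at (insert i \<tau>) i)"

definition cone :: "nat \<Rightarrow> (nat set \<Rightarrow> 'k::comm_ring_1) \<Rightarrow> nat set \<Rightarrow> 'k" where
  "cone v c \<sigma> = (if v \<in> \<sigma> then c (\<sigma> - {v}) else 0)"

lemma sum_if_mem:
  assumes J: "finite J" and IJ: "I \<subseteq> J"
  shows "(\<Sum>i\<in>J. if i \<in> I then g i else 0) = sum g I"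
proof -
  have "J \<inter> I = I" using IJ by blast
  then show ?thesis using sum.inter_restrict[OF J, of g I] by simp
qed

lemma bd_Dop:
  fixes c :: "nat set \<Rightarrow> 'k::comm_ring_1"
  assumes J: "finite J" and F: "F \<subseteq> Pow J" and sup: "\<forall>\<sigma>. c \<sigma> \<noteq> 0 \<longrightarrow> \<sigma> \<in> F"
  shows "bd F c \<tau> = Dop J c \<tau>"
proof -
  have fF: "finite F" by (rule finite_subset[OF F]) (simp add: J)
  have "bd F c \<tau> = (\<Sum>I\<in>F. \<Sum>i\<in>I. if \<tau> = I - {i} then c I * sgn_at I i else 0)"
    unfolding bd_def bd_elem_def sum_distrib_left
    by (intro sum.cong refl) simp
  also have "\<dots> = (\<Sum>I\<in>F. \<Sum>i\<in>J. if i \<in> I \<and> \<tau> = I - {i} then c I * sgn_at I i else 0)"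
  proof (rule sum.cong[OF refl])
    fix I assume "I \<in> F"
    then have IJ: "I \<subseteq> J" using F by auto
    have "(\<Sum>i\<in>J. if i \<in> I \<and> \<tau> = I - {i} then c I * sgn_at I i else 0)
       = (\<Sum>i\<in>J. if i \<in> I then (if \<tau> = I - {i} then c I * sgn_at I i else 0) else 0)"
      by (intro sum.cong refl) simp
    also have "\<dots> = (\<Sum>i\<in>I. if \<tau> = I - {i} then c I * sgn_at I i else 0)"
      by (rule sum_if_mem[OF J IJ])
    finally show "(\<Sum>i\<in>I. if \<tau> = I - {i} then c I * sgn_at I i else 0) =
      (\<Sum>i\<in>J. if i \<in> I \<and> \<tau> = I - {i} then c I * sgn_at I i else 0)" by simp
  qed
  also have "\<dots> = (\<Sum>i\<in>J. \<Sum>I\<in>F. if i \<in> I \<and> \<tau> = I - {i} then c I * sgn_at I i else 0)"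
    by (rule sum.swap)
  also have "\<dots> = (\<Sum>i\<in>J. \<Sum>I\<in>F. if I = insert i \<tau> then (if i \<notin> \<tau> then c I * sgn_at I i else 0) else 0)"
  proof (intro sum.cong refl)
    fix i I
    have "(i \<in> I \<and> \<tau> = I - {i}) = (I = insert i \<tau> \<and> i \<notin> \<tau>)" by blast
    then show "(if i \<in> I \<and> \<tau> = I - {i} then c I * sgn_at I i else 0) =
      (if I = insert i \<tau> then (if i \<notin> \<tau> then c I * sgn_at I i else 0) else 0)" by simp
  qed
  also have "\<dots> = (\<Sum>i\<in>J. if i \<in> J - \<tau> then c (insert i \<tau>) * sgn_at (insert i \<tau>) i else 0)"
  proof (rule sum.cong[OF refl])
    fix i assume iJ: "i \<in> J"
    have "(\<Sum>I\<in>F. if I = insert i \<tau> then (if i \<notin> \<tau> then c I * sgn_at I i else 0) else 0)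
       = (if insert i \<tau> \<in> F then (if i \<notin> \<tau> then c (insert i \<tau>) * sgn_at (insert i \<tau>) i else 0) else 0)"
      by (rule sum.delta[OF fF])
    also have "\<dots> = (if i \<in> J - \<tau> then c (insert i \<tau>) * sgn_at (insert i \<tau>) i else 0)"
    proof (cases "insert i \<tau> \<in> F")
      case False
      then have "c (insert i \<tau>) = 0" using sup by blast
      then show ?thesis by simp
    qed (use iJ in simp)
    finally show "(\<Sum>I\<in>F. if I = insert i \<tau> then (if i \<notin> \<tau> then c I * sgn_at I i else 0) else 0) = \<dots>" .
  qed
  also have "\<dots> = Dop J c \<tau>"
    unfolding Dop_def by (rule sum_if_mem[OF J]) blast
  finally show ?thesis .
qed

lemma homotopy:
  fixes z :: "nat set \<Rightarrow> 'k::comm_ring_1"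
  assumes J: "finite J" and v: "v \<in> J" and vmin: "\<forall>j\<in>J. v \<le> j"
    and sup: "\<forall>\<sigma>. z \<sigma> \<noteq> 0 \<longrightarrow> \<sigma> \<subseteq> J"
  shows "Dop J (cone v z) \<tau> + cone v (Dop J z) \<tau> = z \<tau>"
proof (cases "\<tau> \<subseteq> J")
  case False
  then obtain x where x: "x \<in> \<tau>" "x \<notin> J" by auto
  have z0: "z \<tau> = 0" using sup False by auto
  have a: "Dop J (cone v z) \<tau> = 0" unfolding Dop_def cone_def
  proof (rule sum.neutral, intro ballI)
    fix i assume "i \<in> J - \<tau>"
    have "\<not> (insert i \<tau> - {v} \<subseteq> J)" using x v by auto
    then have "z (insert i \<tau> - {v}) = 0" using sup by blast
    then show "(if v \<in> insert i \<tau> then z (insert i \<tau> - {v}) else 0) * sgn_at (insert i \<tau>) i = 0"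
      by simp
  qed
  have b: "cone v (Dop J z) \<tau> = 0" unfolding Dop_def cone_def
  proof (simp, intro impI sum.neutral ballI)
    fix i assume "i \<in> J - (\<tau> - {v})"
    have "\<not> (insert i (\<tau> - {v}) \<subseteq> J)" using x v by auto
    then have "z (insert i (\<tau> - {v})) = 0" using sup by blast
    then show "z (insert i (\<tau> - {v})) * sgn_at (insert i (\<tau> - {v})) i = 0"
      by simp
  qed
  show ?thesis using a b z0 by simp
next
  case True
  show ?thesis
  proof (cases "v \<in> \<tau>")
    case vt: True
    have e1: "J - (\<tau> - {v}) = insert v (J - \<tau>)" using v vt by auto
    have ins: "insert v (\<tau> - {v}) = \<tau>" using vt by auto
    have s1: "sgn_at \<tau> v = (1::'k)" using vmin True by (intro sgn_min) auto
    have c: "cone v (Dop J z) \<tau> = z \<tau> + (\<Sum>i\<in>J-\<tau>. z (insert i (\<tau> - {v})) * sgn_at (insert i (\<tau> - {v})) i)"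
      unfolding cone_def Dop_def using vt J by (simp add: e1 s1 insert_absorb[OF vt])
    have d: "Dop J (cone v z) \<tau> = (\<Sum>i\<in>J-\<tau>. - (z (insert i (\<tau> - {v})) * sgn_at (insert i (\<tau> - {v})) i))"
      unfolding Dop_def
    proof (rule sum.cong[OF refl])
      fix i assume i: "i \<in> J - \<tau>"
      then have iv: "i \<noteq> v" "v < i" using vt vmin by (metis DiffE le_neq_implies_less)+
      have "cone v z (insert i \<tau>) = z (insert i (\<tau> - {v}))" unfolding cone_def using vt iv
        by (auto intro: arg_cong[where f=z])
      moreover have "sgn_at (insert i \<tau>) i = (sgn_at \<tau> i :: 'k)" by (rule sgn_insert_self)
      moreover have "(sgn_at \<tau> i :: 'k) = - sgn_at (\<tau> - {v}) i"
        using sgn_insert_other[of v "\<tau> - {v}" i] iv ins by simp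
      moreover have "sgn_at (insert i (\<tau> - {v})) i = (sgn_at (\<tau> - {v}) i :: 'k)" by (rule sgn_insert_self)
      ultimately show "cone v z (insert i \<tau>) * sgn_at (insert i \<tau>) i =
         - (z (insert i (\<tau> - {v})) * sgn_at (insert i (\<tau> - {v})) i)" by simp
    qed
    show ?thesis unfolding c d by (simp add: sum_negf)
  next
    case vt: False
    have vJ: "v \<in> J - \<tau>" using v vt by auto
    have c: "cone v (Dop J z) \<tau> = 0" unfolding cone_def using vt by simp
    have s1: "sgn_at (insert v \<tau>) v = (1::'k)" using vmin True by (intro sgn_min) auto
    have "Dop J (cone v z) \<tau> = cone v z (insert v \<tau>) * sgn_at (insert v \<tau>) v
        + (\<Sum>i\<in>J - \<tau> - {v}. cone v z (insert i \<tau>) * sgn_at (insert i \<tau>) i)"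
      unfolding Dop_def using sum.remove[OF _ vJ] J by blast
    also have "(\<Sum>i\<in>J - \<tau> - {v}. cone v z (insert i \<tau>) * sgn_at (insert i \<tau>) i) = 0"
      by (rule sum.neutral) (auto simp: cone_def vt)
    also have "cone v z (insert v \<tau>) = z \<tau>" unfolding cone_def using vt by simp
    finally show ?thesis using c s1 by simp
  qed
qed

lemma DD:
  fixes a :: "nat set \<Rightarrow> 'k::comm_ring_1"
  assumes J: "finite J"
  shows "Dop J (Dop J a) \<tau> = 0"
proof -
  define A where "A = J - \<tau>"
  have fA: "finite A" using J A_def by auto
  define f where "f = (\<lambda>i j. a (insert j (insert i \<tau>)) * sgn_at (insert j (insert i \<tau>)) j * (sgn_at (insert i \<tau>) i :: 'k))"
  have "Dop J (Dop J a) \<tau> = (\<Sum>i\<in>A. Dop J a (insert i \<tau>) * sgn_at (insert i \<tau>) i)"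
    unfolding A_def by (rule Dop_def)
  also have "\<dots> = (\<Sum>i\<in>A. \<Sum>j\<in>A - {i}. f i j)"
  proof (rule sum.cong[OF refl])
    fix i assume "i \<in> A"
    have e: "J - insert i \<tau> = A - {i}" unfolding A_def by blast
    have "Dop J a (insert i \<tau>) = (\<Sum>j\<in>A - {i}. a (insert j (insert i \<tau>)) * sgn_at (insert j (insert i \<tau>)) j)"
      unfolding Dop_def e ..
    then show "Dop J a (insert i \<tau>) * sgn_at (insert i \<tau>) i = (\<Sum>j\<in>A - {i}. f i j)"
      unfolding f_def by (simp only: sum_distrib_right)
  qed
  also have "\<dots> = (\<Sum>p\<in>Sigma A (\<lambda>i. A - {i}). f (fst p) (snd p))"
    using fA by (subst sum.Sigma) (auto simp: split_beta)
  also have "Sigma A (\<lambda>i. A - {i}) = {p \<in> A \<times> A. fst p < snd p} \<union> {p \<in> A \<times> A. snd p < fst p}"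
    by auto
  also have "(\<Sum>p\<in>{p \<in> A \<times> A. fst p < snd p} \<union> {p \<in> A \<times> A. snd p < fst p}. f (fst p) (snd p))
     = (\<Sum>p\<in>{p \<in> A \<times> A. fst p < snd p}. f (fst p) (snd p)) + (\<Sum>p\<in>{p \<in> A \<times> A. snd p < fst p}. f (fst p) (snd p))"
    by (rule sum.union_disjoint) (use fA in auto)
  also have "{p \<in> A \<times> A. snd p < fst p} = prod.swap ` {p \<in> A \<times> A. fst p < snd p}"
    by force
  also have "(\<Sum>p\<in>prod.swap ` {p \<in> A \<times> A. fst p < snd p}. f (fst p) (snd p))
      = (\<Sum>p\<in>{p \<in> A \<times> A. fst p < snd p}. f (snd p) (fst p))"
    by (subst sum.reindex) (auto simp: inj_on_def)
  also have "(\<Sum>p\<in>{p \<in> A \<times> A. fst p < snd p}. f (fst p) (snd p)) + (\<Sum>p\<in>{p \<in> A \<times> A. fst p < snd p}. f (snd p) (fst p))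
     = (\<Sum>p\<in>{p \<in> A \<times> A. fst p < snd p}. f (fst p) (snd p) + f (snd p) (fst p))"
    by (simp add: sum.distrib)
  also have "\<dots> = 0"
  proof (rule sum.neutral, intro ballI)
    fix p assume p: "p \<in> {p \<in> A \<times> A. fst p < snd p}"
    obtain i j where ij: "p = (i, j)" by (cases p)
    have h: "i < j" "i \<notin> \<tau>" "j \<notin> \<tau>" using p ij A_def by auto
    have t1: "sgn_at (insert i \<tau>) j = (- sgn_at \<tau> j :: 'k)"
      using sgn_insert_other[of i \<tau> j] h by simp
    have s1: "sgn_at (insert j (insert i \<tau>)) j = (- sgn_at \<tau> j :: 'k)"
      by (rule trans[OF sgn_insert_self t1])
    have s2: "sgn_at (insert i \<tau>) i = (sgn_at \<tau> i :: 'k)" by (rule sgn_insert_self)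
    have t3: "sgn_at (insert j \<tau>) i = (sgn_at \<tau> i :: 'k)"
      using sgn_insert_other[of j \<tau> i] h by simp
    have s3: "sgn_at (insert i (insert j \<tau>)) i = (sgn_at \<tau> i :: 'k)"
      by (rule trans[OF sgn_insert_self t3])
    have s4: "sgn_at (insert j \<tau>) j = (sgn_at \<tau> j :: 'k)" by (rule sgn_insert_self)
    show "f (fst p) (snd p) + f (snd p) (fst p) = 0"
      unfolding ij f_def using s1 s2 s3 s4 by (simp add: insert_commute[of i j])
  qed
  finally show ?thesis .
qed


lemma MF_char:
  assumes fI: "finite I"
  shows "({S. S \<subseteq> I \<and> card S \<le> d + 1} = {S. S \<subset> I}) \<longleftrightarrow> card I = d + 2"
proof
  assume eq: "{S. S \<subseteq> I \<and> card S \<le> d + 1} = {S. S \<subset> I}"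
  have "I \<notin> {S. S \<subset> I}" by blast
  then have "\<not> card I \<le> d + 1" using eq by blast
  moreover have "\<not> card I \<ge> d + 3"
  proof
    assume "card I \<ge> d + 3"
    then have "d + 2 \<le> card I" by linarith
    then obtain T where T: "T \<subseteq> I" "card T = d + 2" by (rule obtain_subset_with_card_n)
    then have "T \<noteq> I" using \<open>card I \<ge> d + 3\<close> by auto
    then have "T \<in> {S. S \<subset> I}" using T by blast
    moreover have "T \<notin> {S. S \<subseteq> I \<and> card S \<le> d + 1}" using T by simp
    ultimately show False using eq by blast
  qed
  ultimately show "card I = d + 2" by linarith
next
  assume c: "card I = d + 2"
  show "{S. S \<subseteq> I \<and> card S \<le> d + 1} = {S. S \<subset> I}"
  proof (intro set_eqI iffI)
    fix S assume "S \<in> {S. S \<subseteq> I \<and> card S \<le> d + 1}"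
    then show "S \<in> {S. S \<subset> I}" using c by auto
  next
    fix S assume "S \<in> {S. S \<subset> I}"
    then have "S \<subset> I" by simp
    then have "card S < card I" using psubset_card_mono[OF fI] by blast
    then show "S \<in> {S. S \<subseteq> I \<and> card S \<le> d + 1}" using c \<open>S \<subset> I\<close> by auto
  qed
qed

lemma AMF_char:
  assumes fL: "finite L"
  shows "(bdry2_simplex L \<subseteq> {S. S \<subseteq> L \<and> card S \<le> d + 1} \<and> {S. S \<subseteq> L \<and> card S \<le> d + 1} \<subset> bdry_simplex L)
     \<longleftrightarrow> card L = d + 3"
proof
  assume H: "bdry2_simplex L \<subseteq> {S. S \<subseteq> L \<and> card S \<le> d + 1} \<and> {S. S \<subseteq> L \<and> card S \<le> d + 1} \<subset> bdry_simplex L"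
  have "L \<notin> bdry_simplex L" unfolding bdry_simplex_def by blast
  then have "\<not> card L \<le> d + 1" using H by blast
  moreover have "card L \<noteq> d + 2"
  proof
    assume "card L = d + 2"
    then have "{S. S \<subseteq> L \<and> card S \<le> d + 1} = bdry_simplex L"
      using MF_char[OF fL, of d] unfolding bdry_simplex_def by simp
    then show False using H by simp
  qed
  moreover have "\<not> card L \<ge> d + 4"
  proof
    assume cL: "card L \<ge> d + 4"
    then have "d + 2 \<le> card L" by linarith
    then obtain T where T: "T \<subseteq> L" "card T = d + 2" by (rule obtain_subset_with_card_n)
    have "finite T" using T fL finite_subset by blast
    then have "card (L - T) = card L - card T" using T card_Diff_subset by blast
    then have "T \<in> bdry2_simplex L" unfolding bdry2_simplex_def using T cL by auto
    moreover have "T \<notin> {S. S \<subseteq> L \<and> card S \<le> d + 1}" using T by simp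
    ultimately show False using H by blast
  qed
  ultimately show "card L = d + 3" by linarith
next
  assume c: "card L = d + 3"
  have "bdry2_simplex L \<subseteq> {S. S \<subseteq> L \<and> card S \<le> d + 1}"
  proof
    fix S assume "S \<in> bdry2_simplex L"
    then have S: "S \<subseteq> L" "card (L - S) \<ge> 2" unfolding bdry2_simplex_def by auto
    have "finite S" using S fL finite_subset by blast
    then have "card (L - S) = card L - card S" using S card_Diff_subset by blast
    then show "S \<in> {S. S \<subseteq> L \<and> card S \<le> d + 1}" using S c by auto
  qed
  moreover have "{S. S \<subseteq> L \<and> card S \<le> d + 1} \<subseteq> bdry_simplex L"
    unfolding bdry_simplex_def using c by auto
  moreover have "{S. S \<subseteq> L \<and> card S \<le> d + 1} \<noteq> bdry_simplex L"
  proof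
    assume eq: "{S. S \<subseteq> L \<and> card S \<le> d + 1} = bdry_simplex L"
    have "d + 2 \<le> card L" using c by linarith
    then obtain T where T: "T \<subseteq> L" "card T = d + 2" by (rule obtain_subset_with_card_n)
    then have "T \<in> bdry_simplex L" unfolding bdry_simplex_def using c by auto
    then have "T \<in> {S. S \<subseteq> L \<and> card S \<le> d + 1}" using eq by simp
    then show False using T by simp
  qed
  ultimately show "bdry2_simplex L \<subseteq> {S. S \<subseteq> L \<and> card S \<le> d + 1} \<and> {S. S \<subseteq> L \<and> card S \<le> d + 1} \<subset> bdry_simplex L"
    by blast
qed

lemma cone_support:
  fixes z :: "nat set \<Rightarrow> 'k::comm_ring_1"
  assumes J: "finite J" and v: "v \<in> J" and sup: "\<forall>\<sigma>. z \<sigma> \<noteq> 0 \<longrightarrow> \<sigma> \<subseteq> J \<and> card \<sigma> = q"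
  shows "\<forall>\<sigma>. cone v z \<sigma> \<noteq> 0 \<longrightarrow> \<sigma> \<subseteq> J \<and> card \<sigma> = Suc q"
proof (intro allI impI)
  fix \<sigma> assume "cone v z \<sigma> \<noteq> 0"
  then have vs: "v \<in> \<sigma>" and nz: "z (\<sigma> - {v}) \<noteq> 0" unfolding cone_def by (auto split: if_splits)
  have s: "\<sigma> - {v} \<subseteq> J" "card (\<sigma> - {v}) = q" using sup nz by auto
  have f: "finite (\<sigma> - {v})" using s J finite_subset by blast
  have e: "\<sigma> = insert v (\<sigma> - {v})" using vs by auto
  have "card (insert v (\<sigma> - {v})) = Suc (card (\<sigma> - {v}))" using f by (rule card_insert_disjoint) simp
  then have "card \<sigma> = Suc q" using s(2) e by simp
  then show "\<sigma> \<subseteq> J \<and> card \<sigma> = Suc q" using s v e by auto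
qed


lemma is_boundary_zero: "is_boundary K q (\<lambda>_. 0 :: 'k::comm_ring_1)"
  unfolding is_boundary_def chain_on_def bd_def by (rule exI[of _ "\<lambda>_. 0"]) simp

theorem mainTheorem12:
  fixes m d :: nat
  assumes "d + 1 \<le> m"
  shows "HMF_presented TYPE('k::comm_ring_1) {1..m} (skeleton d m)"
  unfolding HMF_presented_def
proof (intro allI impI, rule conjI)
  fix J assume HJ: "J \<subseteq> {1..m} \<and> J \<noteq> {}"
  define K where "K = full_sub (skeleton d m) J"
  have fJ: "finite J" using HJ finite_subset by blast
  define v where "v = Min J"
  have vJ: "v \<in> J" unfolding v_def using fJ HJ by simp
  have vmin: "\<forall>j\<in>J. v \<le> j" unfolding v_def using fJ by simp
  have memK: "\<And>\<sigma>. \<sigma> \<in> K \<longleftrightarrow> \<sigma> \<subseteq> J \<and> card \<sigma> \<le> d + 1"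
    unfolding K_def full_sub_def skeleton_def using HJ by auto
  have KJ: "K \<subseteq> Pow J" using memK by auto
  have fullI: "\<And>I. I \<subseteq> J \<Longrightarrow> full_sub K I = {S. S \<subseteq> I \<and> card S \<le> d + 1}"
    unfolding full_sub_def using memK by auto
  have MF_eq: "MF K J = {I. I \<subseteq> J \<and> card I = d + 2}"
  proof (intro set_eqI iffI)
    fix I assume "I \<in> MF K J"
    then have I: "I \<subseteq> J" "full_sub K I = bdry_simplex I" unfolding MF_def by auto
    have "finite I" using I fJ finite_subset by blast
    then show "I \<in> {I. I \<subseteq> J \<and> card I = d + 2}"
      using MF_char[of I d] I fullI[of I] unfolding bdry_simplex_def by simp
  next
    fix I assume "I \<in> {I. I \<subseteq> J \<and> card I = d + 2}"
    then have I: "I \<subseteq> J" "card I = d + 2" by auto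
    have "finite I" using I fJ finite_subset by blast
    then show "I \<in> MF K J"
      using MF_char[of I d] I fullI[of I] unfolding bdry_simplex_def MF_def by simp
  qed
  have AMF_eq: "AMF K J = {L. L \<subseteq> J \<and> card L = d + 3}"
  proof (intro set_eqI iffI)
    fix L assume "L \<in> AMF K J"
    then have L: "L \<subseteq> J" "bdry2_simplex L \<subseteq> full_sub K L \<and> full_sub K L \<subset> bdry_simplex L"
      unfolding AMF_def by auto
    have "finite L" using L fJ finite_subset by blast
    then show "L \<in> {L. L \<subseteq> J \<and> card L = d + 3}"
      using AMF_char[of L d] L fullI[of L] by simp
  next
    fix L assume "L \<in> {L. L \<subseteq> J \<and> card L = d + 3}"
    then have L: "L \<subseteq> J" "card L = d + 3" by auto
    have "finite L" using L fJ finite_subset by blast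
    then show "L \<in> AMF K J"
      using AMF_char[of L d] L fullI[of L] unfolding AMF_def by simp
  qed
  have MFsub: "{I \<in> MF K J. card I = Suc q} \<subseteq> Pow J" for q using MF_eq by auto
  show "\<forall>q (z :: nat set \<Rightarrow> 'k). is_cycle (full_sub (skeleton d m) J) q z \<longrightarrow>
         (\<exists>c :: nat set \<Rightarrow> 'k. is_boundary (full_sub (skeleton d m) J) q
            (\<lambda>\<tau>. z \<tau> - (\<Sum>I\<in>{I \<in> MF (full_sub (skeleton d m) J) J. card I = Suc q}. c I * bd_elem I \<tau>)))"
    unfolding K_def[symmetric]
  proof (intro allI impI)
    fix q and z :: "nat set \<Rightarrow> 'k"
    assume cyc: "is_cycle K q z"
    have zsup: "\<forall>\<tau>. z \<tau> \<noteq> 0 \<longrightarrow> \<tau> \<in> K \<and> card \<tau> = q" using cyc unfolding is_cycle_def chain_on_def by blast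
    have zsupJ: "\<forall>\<tau>. z \<tau> \<noteq> 0 \<longrightarrow> \<tau> \<subseteq> J \<and> card \<tau> = q" using zsup memK by blast
    have Dz: "Dop J z \<tau> = 0" for \<tau>
    proof -
      have "bd K z \<tau> = 0" using cyc unfolding is_cycle_def by simp
      moreover have "bd K z \<tau> = Dop J z \<tau>" using bd_Dop[OF fJ KJ] zsup by blast
      ultimately show ?thesis by simp
    qed
    have zeq: "z \<tau> = Dop J (cone v z) \<tau>" for \<tau>
    proof -
      have "cone v (Dop J z) \<tau> = 0" unfolding cone_def using Dz by simp
      then show ?thesis using homotopy[OF fJ vJ vmin, of z \<tau>] zsupJ by simp
    qed
    have csup: "\<forall>\<sigma>. cone v z \<sigma> \<noteq> 0 \<longrightarrow> \<sigma> \<subseteq> J \<and> card \<sigma> = Suc q"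
      by (rule cone_support[OF fJ vJ zsupJ])
    show "\<exists>c :: nat set \<Rightarrow> 'k. is_boundary K q
            (\<lambda>\<tau>. z \<tau> - (\<Sum>I\<in>{I \<in> MF K J. card I = Suc q}. c I * bd_elem I \<tau>))"
    proof (cases "q = d + 1")
      case True
      have "(\<lambda>\<tau>. z \<tau> - (\<Sum>I\<in>{I \<in> MF K J. card I = Suc q}. cone v z I * bd_elem I \<tau>)) = (\<lambda>_. 0)"
      proof
        fix \<tau>
        have "(\<Sum>I\<in>{I \<in> MF K J. card I = Suc q}. cone v z I * bd_elem I \<tau>) = bd {I \<in> MF K J. card I = Suc q} (cone v z) \<tau>"
          unfolding bd_def ..
        also have "\<dots> = Dop J (cone v z) \<tau>"
          by (rule bd_Dop[OF fJ MFsub]) (use csup MF_eq True in auto)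
        finally show "z \<tau> - (\<Sum>I\<in>{I \<in> MF K J. card I = Suc q}. cone v z I * bd_elem I \<tau>) = 0"
          using zeq by simp
      qed
      then show ?thesis by (intro exI[of _ "cone v z"]) (subst \<open>_ = (\<lambda>_. 0)\<close>, rule is_boundary_zero)
    next
      case False
      have "is_boundary K q z"
        unfolding is_boundary_def
      proof (intro exI conjI)
        show ch: "chain_on K (Suc q) (cone v z)"
          unfolding chain_on_def
        proof (intro allI impI)
          fix \<sigma> assume nz: "cone v z \<sigma> \<noteq> 0"
          then have s: "\<sigma> \<subseteq> J" "card \<sigma> = Suc q" using csup by auto
          from nz have "z (\<sigma> - {v}) \<noteq> 0" unfolding cone_def by (auto split: if_splits)
          then have "\<sigma> - {v} \<in> K" "card (\<sigma> - {v}) = q" using zsup by auto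
          then have "q \<le> d + 1" using memK by auto
          then have "\<sigma> \<in> K" using False s memK by auto
          then show "\<sigma> \<in> K \<and> card \<sigma> = Suc q" using s by simp
        qed
        show "z = bd K (cone v z)"
        proof
          fix \<tau>
          have "bd K (cone v z) \<tau> = Dop J (cone v z) \<tau>"
            by (rule bd_Dop[OF fJ KJ]) (use ch in \<open>auto simp: chain_on_def\<close>)
          then show "z \<tau> = bd K (cone v z) \<tau>" using zeq by simp
        qed
      qed
      then have "is_boundary K q (\<lambda>\<tau>. z \<tau> - (\<Sum>I\<in>{I \<in> MF K J. card I = Suc q}. (\<lambda>_. 0) I * bd_elem I \<tau>))"
        by simp
      then show ?thesis by (rule exI[of _ "\<lambda>_. 0"])
    qed
  qed
next
  fix J assume HJ: "J \<subseteq> {1..m} \<and> J \<noteq> {}"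
  define K where "K = full_sub (skeleton d m) J"
  have fJ: "finite J" using HJ finite_subset by blast
  define v where "v = Min J"
  have vJ: "v \<in> J" unfolding v_def using fJ HJ by simp
  have vmin: "\<forall>j\<in>J. v \<le> j" unfolding v_def using fJ by simp
  have memK: "\<And>\<sigma>. \<sigma> \<in> K \<longleftrightarrow> \<sigma> \<subseteq> J \<and> card \<sigma> \<le> d + 1"
    unfolding K_def full_sub_def skeleton_def using HJ by auto
  have KJ: "K \<subseteq> Pow J" using memK by auto
  have fullI: "\<And>I. I \<subseteq> J \<Longrightarrow> full_sub K I = {S. S \<subseteq> I \<and> card S \<le> d + 1}"
    unfolding full_sub_def using memK by auto
  have MF_eq: "MF K J = {I. I \<subseteq> J \<and> card I = d + 2}"
  proof (intro set_eqI iffI)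
    fix I assume "I \<in> MF K J"
    then have I: "I \<subseteq> J" "full_sub K I = bdry_simplex I" unfolding MF_def by auto
    have "finite I" using I fJ finite_subset by blast
    then show "I \<in> {I. I \<subseteq> J \<and> card I = d + 2}"
      using MF_char[of I d] I fullI[of I] unfolding bdry_simplex_def by simp
  next
    fix I assume "I \<in> {I. I \<subseteq> J \<and> card I = d + 2}"
    then have I: "I \<subseteq> J" "card I = d + 2" by auto
    have "finite I" using I fJ finite_subset by blast
    then show "I \<in> MF K J"
      using MF_char[of I d] I fullI[of I] unfolding bdry_simplex_def MF_def by simp
  qed
  have AMF_eq: "AMF K J = {L. L \<subseteq> J \<and> card L = d + 3}"
  proof (intro set_eqI iffI)
    fix L assume "L \<in> AMF K J"
    then have L: "L \<subseteq> J" "bdry2_simplex L \<subseteq> full_sub K L \<and> full_sub K L \<subset> bdry_simplex L"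
      unfolding AMF_def by auto
    have "finite L" using L fJ finite_subset by blast
    then show "L \<in> {L. L \<subseteq> J \<and> card L = d + 3}"
      using AMF_char[of L d] L fullI[of L] by simp
  next
    fix L assume "L \<in> {L. L \<subseteq> J \<and> card L = d + 3}"
    then have L: "L \<subseteq> J" "card L = d + 3" by auto
    have "finite L" using L fJ finite_subset by blast
    then show "L \<in> AMF K J"
      using AMF_char[of L d] L fullI[of L] unfolding AMF_def by simp
  qed
  have MFsub: "{I \<in> MF K J. card I = Suc q} \<subseteq> Pow J" for q using MF_eq by auto
  have AMFsub: "AMF K J \<subseteq> Pow J" using AMF_eq by auto
  have rho_bd: "rho_coef K L I = bd_elem L I" if L: "L \<in> AMF K J" for L I
    unfolding rho_coef_def bd_elem_def
  proof (rule sum.cong[OF refl])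
    fix i assume i: "i \<in> L"
    have L2: "L \<subseteq> J" "card L = d + 3" using L AMF_eq by auto
    have "finite L" using L2 fJ finite_subset by blast
    then have "card (L - {i}) = d + 2" using L2 i by simp
    then have "L - {i} \<notin> K" using memK by simp
    then show "(if L - {i} \<notin> K \<and> I = L - {i} then sgn_at L i else 0) =
               (if I = L - {i} then sgn_at L i else 0)" by simp
  qed
  show "\<forall>c :: nat set \<Rightarrow> 'k. (\<forall>I. c I \<noteq> 0 \<longrightarrow> I \<in> MF (full_sub (skeleton d m) J) J) \<longrightarrow>
         ((\<forall>q. is_boundary (full_sub (skeleton d m) J) q
               (\<lambda>\<tau>. \<Sum>I\<in>{I \<in> MF (full_sub (skeleton d m) J) J. card I = Suc q}. c I * bd_elem I \<tau>))
          \<longleftrightarrow>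
          (\<exists>a :: nat set \<Rightarrow> 'k. c = (\<lambda>I. \<Sum>L\<in>AMF (full_sub (skeleton d m) J) J. a L * rho_coef (full_sub (skeleton d m) J) L I)))"
    unfolding K_def[symmetric]
  proof (intro allI impI, rule iffI)
    fix c :: "nat set \<Rightarrow> 'k"
    assume supp: "\<forall>I. c I \<noteq> 0 \<longrightarrow> I \<in> MF K J"
    have csupJ: "\<forall>I. c I \<noteq> 0 \<longrightarrow> I \<subseteq> J \<and> card I = d + 2" using supp MF_eq by blast
    have bdc: "(\<Sum>I\<in>{I \<in> MF K J. card I = Suc (d + 1)}. c I * bd_elem I \<tau>) = Dop J c \<tau>" for \<tau>
    proof -
      have "(\<Sum>I\<in>{I \<in> MF K J. card I = Suc (d + 1)}. c I * bd_elem I \<tau>) = bd {I \<in> MF K J. card I = Suc (d + 1)} c \<tau>"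
        unfolding bd_def ..
      also have "\<dots> = Dop J c \<tau>"
        by (rule bd_Dop[OF fJ MFsub]) (use supp csupJ in auto)
      finally show ?thesis .
    qed
    {
      assume H: "\<forall>q. is_boundary K q (\<lambda>\<tau>. \<Sum>I\<in>{I \<in> MF K J. card I = Suc q}. c I * bd_elem I \<tau>)"
      obtain b :: "nat set \<Rightarrow> 'k" where b: "chain_on K (Suc (d + 1)) b"
        "(\<lambda>\<tau>. \<Sum>I\<in>{I \<in> MF K J. card I = Suc (d + 1)}. c I * bd_elem I \<tau>) = bd K b"
        using H[rule_format, of "d + 1"] unfolding is_boundary_def by blast
      have b0: "b I = 0" for I
      proof (rule ccontr)
        assume "b I \<noteq> 0"
        then have "I \<in> K \<and> card I = Suc (d + 1)" using b(1) unfolding chain_on_def by blast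
        then have "card I \<le> d + 1" "card I = Suc (d + 1)" using memK by blast+
        then show False by simp
      qed
      have bK0: "bd K b \<tau> = 0" for \<tau> unfolding bd_def using b0 by simp
      have Dc: "Dop J c \<tau> = 0" for \<tau>
        using fun_cong[OF b(2), of \<tau>] bdc[of \<tau>] bK0[of \<tau>] by simp
      have ceq: "c \<tau> = Dop J (cone v c) \<tau>" for \<tau>
      proof -
        have "cone v (Dop J c) \<tau> = 0" unfolding cone_def using Dc by simp
        then show ?thesis using homotopy[OF fJ vJ vmin, of c \<tau>] csupJ by simp
      qed
      have asup: "\<forall>\<sigma>. cone v c \<sigma> \<noteq> 0 \<longrightarrow> \<sigma> \<subseteq> J \<and> card \<sigma> = Suc (d + 2)"
        by (rule cone_support[OF fJ vJ csupJ])
      show "\<exists>a. c = (\<lambda>I. \<Sum>L\<in>AMF K J. a L * rho_coef K L I)"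
      proof (intro exI ext)
        fix I
        have "(\<Sum>L\<in>AMF K J. cone v c L * rho_coef K L I) = bd (AMF K J) (cone v c) I"
          unfolding bd_def by (rule sum.cong[OF refl]) (simp add: rho_bd)
        also have "\<dots> = Dop J (cone v c) I"
          by (rule bd_Dop[OF fJ AMFsub]) (use asup AMF_eq in auto)
        finally show "c I = (\<Sum>L\<in>AMF K J. cone v c L * rho_coef K L I)" using ceq by simp
      qed
    }
    {
      assume "\<exists>a. c = (\<lambda>I. \<Sum>L\<in>AMF K J. a L * rho_coef K L I)"
      then obtain a where a: "c = (\<lambda>I. \<Sum>L\<in>AMF K J. a L * rho_coef K L I)" by blast
      define a' where "a' = (\<lambda>L. if L \<in> AMF K J then a L else 0)"
      have cD: "c = Dop J a'"
      proof
        fix I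
        have "c I = (\<Sum>L\<in>AMF K J. a' L * bd_elem L I)"
          unfolding a a'_def by (rule sum.cong[OF refl]) (simp add: rho_bd)
        also have "\<dots> = bd (AMF K J) a' I" unfolding bd_def ..
        also have "\<dots> = Dop J a' I"
          by (rule bd_Dop[OF fJ AMFsub]) (auto simp: a'_def split: if_splits)
        finally show "c I = Dop J a' I" .
      qed
      show "\<forall>q. is_boundary K q (\<lambda>\<tau>. \<Sum>I\<in>{I \<in> MF K J. card I = Suc q}. c I * bd_elem I \<tau>)"
      proof
        fix q
        have z0: "(\<lambda>\<tau>. \<Sum>I\<in>{I \<in> MF K J. card I = Suc q}. c I * bd_elem I \<tau>) = (\<lambda>_. 0)"
        proof
          fix \<tau>
          show "(\<Sum>I\<in>{I \<in> MF K J. card I = Suc q}. c I * bd_elem I \<tau>) = 0"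
          proof (cases "q = d + 1")
            case True
            have "(\<Sum>I\<in>{I \<in> MF K J. card I = Suc q}. c I * bd_elem I \<tau>) = Dop J c \<tau>"
              using bdc True by simp
            also have "\<dots> = 0" unfolding cD by (rule DD[OF fJ])
            finally show ?thesis .
          next
            case False
            have e: "{I \<in> MF K J. card I = Suc q} = {}" using MF_eq False by auto
            show ?thesis by (simp only: e sum.empty)
          qed
        qed
        show "is_boundary K q (\<lambda>\<tau>. \<Sum>I\<in>{I \<in> MF K J. card I = Suc q}. c I * bd_elem I \<tau>)"
          by (rule ssubst[OF z0], rule is_boundary_zero)
      qed
    }
  qed
qed

end
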